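(* Let $(c_{i,j})_{0\le i,j\le 3}$ be real numbers satisfying the fourteen equations (E0), (R1)–(R9), (O1)–(O4). Then $$\big|\,c_{2,2}+c_{3,3}-c_{3,2}-c_{2,3}\,\big|\le \frac{\sqrt7}{4}<1 .$$
   Context: (E0): $\sum_{i=0}^3\sum_{j=0}^3 c_{i,j}=4$. Regularity equations: (R1) $c_{0,1}+c_{0,3}+c_{2,1}+c_{2,3}=c_{0,0}+c_{0,2}+c_{2,0}+c_{2,2}$; (R2) $c_{1,1}+c_{1,3}+c_{3,1}+c_{3,3}=c_{0,0}+c_{0,2}+c_{2,0}+c_{2,2}$; (R3) $c_{1,0}+c_{1,2}+c_{3,0}+c_{3,2}=c_{0,0}+c_{0,2}+c_{2,0}+c_{2,2}$; (R4) $c_{2,1}+c_{2,3}=c_{2,0}+c_{2,2}$; (R5) $c_{1,1}+c_{1,3}+3c_{3,1}+3c_{3,3}=2c_{2,0}+2c_{2,2}$; (R6) $c_{1,0}+c_{1,2}+3c_{3,0}+3c_{3,2}=2c_{2,0}+2c_{2,2}$; (R7) $c_{0,1}+c_{2,1}+3c_{0,3}+3c_{2,3}=2c_{0,2}+2c_{2,2}$; (R8) $c_{1,1}+c_{3,1}+3c_{1,3}+3c_{3,3}=2c_{0,2}+2c_{2,2}$; (R9) $c_{1,2}+c_{3,2}=c_{0,2}+c_{2,2}$. Orthogonality equations: (O1) $\sum_{i=0}^3\sum_{j=0}^3 c_{i,j}^2=4$; (O2) $c_{3,3}c_{1,1}+c_{3,2}c_{1,0}+c_{2,3}c_{0,1}+c_{2,2}c_{0,0}=0$;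 (O3) $c_{3,3}c_{1,3}+c_{3,2}c_{1,2}+c_{2,3}c_{0,3}+c_{2,2}c_{0,2}+c_{3,1}c_{1,1}+c_{3,0}c_{1,0}+c_{2,1}c_{0,1}+c_{2,0}c_{0,0}=0$; (O4) $c_{3,3}c_{3,1}+c_{3,2}c_{3,0}+c_{2,3}c_{2,1}+c_{2,2}c_{2,0}+c_{1,3}c_{1,1}+c_{1,2}c_{1,0}+c_{0,3}c_{0,1}+c_{0,2}c_{0,0}=0$. *)

theory Defs
  imports Complex_Main
begin

end

theory Submission
  imports Defs
begin

lemma key_ineq: fixes U V R s c L :: real
  assumes "L = R - U - V" "U+V+R = 2*s + c"
    "s^2 + U^2+V^2+R^2 - s*(U+V) - R*(1/2+s) = 1/8" "c^2 = 9/16"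
  shows "L^2 \<le> 7/16"
proof -
  have e: "1 - c^2 - L^2 = ((8*s+4*(L+c-1))^2 + 64*(U-V)^2) / 32"
    using assms(1-3) by algebra
  have "0 \<le> 1 - c^2 - L^2" unfolding e by simp
  then show ?thesis using assms(4) by simp
qed

lemma csq: fixes p q :: real
  assumes "8*p^2 - 4*p - 1 = 0" "8*q^2 - 4*q - 1 = 0"
  shows "(3/4 - 2*(p-q)^2)^2 = 9/16"
proof -
  have "(p - q) * (8*(p+q) - 4) = 0" using assms by algebra
  then consider "p = q" | "p + q = 1/2" by fastforce
  then show ?thesis
  proof cases
    case 1 then show ?thesis by (simp add: power2_eq_square)
  next
    case 2
    then have "q = 1/2 - p" by simp
    then have h: "(p-q)^2 = 3/4" using assms(1) by algebra
    show ?thesis unfolding h by (simp add: power2_eq_square)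
  qed
qed

theorem mainTheorem8:
  fixes c :: "nat \<Rightarrow> nat \<Rightarrow> real"
  assumes E0: "(\<Sum>i\<in>{0..3}. \<Sum>j\<in>{0..3}. c i j) = 4"
    and R1: "c 0 1 + c 0 3 + c 2 1 + c 2 3 = c 0 0 + c 0 2 + c 2 0 + c 2 2"
    and R2: "c 1 1 + c 1 3 + c 3 1 + c 3 3 = c 0 0 + c 0 2 + c 2 0 + c 2 2"
    and R3: "c 1 0 + c 1 2 + c 3 0 + c 3 2 = c 0 0 + c 0 2 + c 2 0 + c 2 2"
    and R4: "c 2 1 + c 2 3 = c 2 0 + c 2 2"
    and R5: "c 1 1 + c 1 3 + 3 * c 3 1 + 3 * c 3 3 = 2 * c 2 0 + 2 * c 2 2"
    and R6: "c 1 0 + c 1 2 + 3 * c 3 0 + 3 * c 3 2 = 2 * c 2 0 + 2 * c 2 2"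
    and R7: "c 0 1 + c 2 1 + 3 * c 0 3 + 3 * c 2 3 = 2 * c 0 2 + 2 * c 2 2"
    and R8: "c 1 1 + c 3 1 + 3 * c 1 3 + 3 * c 3 3 = 2 * c 0 2 + 2 * c 2 2"
    and R9: "c 1 2 + c 3 2 = c 0 2 + c 2 2"
    and O1: "(\<Sum>i\<in>{0..3}. \<Sum>j\<in>{0..3}. (c i j)\<^sup>2) = 4"
    and O2: "c 3 3 * c 1 1 + c 3 2 * c 1 0 + c 2 3 * c 0 1 + c 2 2 * c 0 0 = 0"
    and O3: "c 3 3 * c 1 3 + c 3 2 * c 1 2 + c 2 3 * c 0 3 + c 2 2 * c 0 2
             + c 3 1 * c 1 1 + c 3 0 * c 1 0 + c 2 1 * c 0 1 + c 2 0 * c 0 0 = 0"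
    and O4: "c 3 3 * c 3 1 + c 3 2 * c 3 0 + c 2 3 * c 2 1 + c 2 2 * c 2 0
             + c 1 3 * c 1 1 + c 1 2 * c 1 0 + c 0 3 * c 0 1 + c 0 2 * c 0 0 = 0"
  shows "\<bar>c 2 2 + c 3 3 - c 3 2 - c 2 3\<bar> \<le> sqrt 7 / 4 \<and> sqrt 7 / 4 < 1"
proof -
  have s4: "{0..3::nat} = {0,1,2,3}" by auto
  have E0': "c 0 0 + c 0 1 + c 0 2 + c 0 3 + c 1 0 + c 1 1 + c 1 2 + c 1 3 + c 2 0 + c 2 1 + c 2 2 + c 2 3 + c 3 0 + c 3 1 + c 3 2 + c 3 3 = 4"
    using E0 unfolding s4 by (simp add: algebra_simps)
  have O1': "(c 0 0)^2 + (c 0 1)^2 + (c 0 2)^2 + (c 0 3)^2 + (c 1 0)^2 + (c 1 1)^2 + (c 1 2)^2 + (c 1 3)^2 + (c 2 0)^2 + (c 2 1)^2 + (c 2 2)^2 + (c 2 3)^2 + (c 3 0)^2 + (c 3 1)^2 + (c 3 2)^2 + (c 3 3)^2 = 4"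
    using O1 unfolding s4 by (simp add: algebra_simps)
  note L = E0' R1 R2 R3 R4 R5 R6 R7 R8 R9
  have p00: "c 0 0 = - c 1 3 + c 2 2 - c 3 1 - 2 * c 3 3" using L by linarith
  have p01: "c 0 1 = 1/2 - c 1 3 + c 2 3 - c 3 1 - 2 * c 3 3" using L by linarith
  have p02: "c 0 2 = 1/2 + c 1 3 - c 2 2 + c 3 3" using L by linarith
  have p03: "c 0 3 = c 1 3 - c 2 3 + c 3 3" using L by linarith
  have p10: "c 1 0 = 1/2 - c 1 3 - c 3 1 + c 3 2 - 2 * c 3 3" using L by linarith
  have p11: "c 1 1 = 1 - c 1 3 - c 3 1 - c 3 3" using L by linarith
  have p12: "c 1 2 = 1/2 + c 1 3 - c 3 2 + c 3 3" using L by linarith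
  have p20: "c 2 0 = 1/2 - c 2 2 + c 3 1 + c 3 3" using L by linarith
  have p21: "c 2 1 = 1/2 - c 2 3 + c 3 1 + c 3 3" using L by linarith
  have p30: "c 3 0 = c 3 1 - c 3 2 + c 3 3" using L by linarith
  note piv = p00 p01 p02 p03 p10 p11 p12 p20 p21 p30
  define A1 where "A1 = (c 0 0)^2 + (c 0 1)^2 + (c 0 2)^2 + (c 0 3)^2 + (c 1 0)^2 + (c 1 1)^2 + (c 1 2)^2 + (c 1 3)^2 + (c 2 0)^2 + (c 2 1)^2 + (c 2 2)^2 + (c 2 3)^2 + (c 3 0)^2 + (c 3 1)^2 + (c 3 2)^2 + (c 3 3)^2 - 4"
  define A2 where "A2 = c 3 3 * c 1 1 + c 3 2 * c 1 0 + c 2 3 * c 0 1 + c 2 2 * c 0 0"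
  define A3 where "A3 = c 3 3 * c 1 3 + c 3 2 * c 1 2 + c 2 3 * c 0 3 + c 2 2 * c 0 2
             + c 3 1 * c 1 1 + c 3 0 * c 1 0 + c 2 1 * c 0 1 + c 2 0 * c 0 0"
  define A4 where "A4 = c 3 3 * c 3 1 + c 3 2 * c 3 0 + c 2 3 * c 2 1 + c 2 2 * c 2 0
             + c 1 3 * c 1 1 + c 1 2 * c 1 0 + c 0 3 * c 0 1 + c 0 2 * c 0 0"
  have z1: "A1 = 0" using O1' unfolding A1_def by simp
  have z2: "A2 = 0" using O2 unfolding A2_def by simp
  have z3: "A3 = 0" using O3 unfolding A3_def by simp
  have z4: "A4 = 0" using O4 unfolding A4_def by simp
  have A1e: "A1 = (- c 1 3 + c 2 2 - c 3 1 - 2 * c 3 3)^2 + (1/2 - c 1 3 + c 2 3 - c 3 1 - 2 * c 3 3)^2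
     + (1/2 + c 1 3 - c 2 2 + c 3 3)^2 + (c 1 3 - c 2 3 + c 3 3)^2 + (1/2 - c 1 3 - c 3 1 + c 3 2 - 2 * c 3 3)^2
     + (1 - c 1 3 - c 3 1 - c 3 3)^2 + (1/2 + c 1 3 - c 3 2 + c 3 3)^2 + (c 1 3)^2 + (1/2 - c 2 2 + c 3 1 + c 3 3)^2
     + (1/2 - c 2 3 + c 3 1 + c 3 3)^2 + (c 2 2)^2 + (c 2 3)^2 + (c 3 1 - c 3 2 + c 3 3)^2 + (c 3 1)^2 + (c 3 2)^2 + (c 3 3)^2 - 4"
    unfolding A1_def by (simp only: piv)
  have A2e: "A2 = c 3 3 * (1 - c 1 3 - c 3 1 - c 3 3) + c 3 2 * (1/2 - c 1 3 - c 3 1 + c 3 2 - 2 * c 3 3)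
      + c 2 3 * (1/2 - c 1 3 + c 2 3 - c 3 1 - 2 * c 3 3) + c 2 2 * (- c 1 3 + c 2 2 - c 3 1 - 2 * c 3 3)"
    unfolding A2_def by (simp only: piv)
  have A3e: "A3 = c 3 3 * c 1 3 + c 3 2 * (1/2 + c 1 3 - c 3 2 + c 3 3) + c 2 3 * (c 1 3 - c 2 3 + c 3 3)
      + c 2 2 * (1/2 + c 1 3 - c 2 2 + c 3 3) + c 3 1 * (1 - c 1 3 - c 3 1 - c 3 3)
      + (c 3 1 - c 3 2 + c 3 3) * (1/2 - c 1 3 - c 3 1 + c 3 2 - 2 * c 3 3)
      + (1/2 - c 2 3 + c 3 1 + c 3 3) * (1/2 - c 1 3 + c 2 3 - c 3 1 - 2 * c 3 3)
      + (1/2 - c 2 2 + c 3 1 + c 3 3) * (- c 1 3 + c 2 2 - c 3 1 - 2 * c 3 3)"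
    unfolding A3_def by (simp only: piv)
  have A4e: "A4 = c 3 3 * c 3 1 + c 3 2 * (c 3 1 - c 3 2 + c 3 3) + c 2 3 * (1/2 - c 2 3 + c 3 1 + c 3 3)
      + c 2 2 * (1/2 - c 2 2 + c 3 1 + c 3 3) + c 1 3 * (1 - c 1 3 - c 3 1 - c 3 3)
      + (1/2 + c 1 3 - c 3 2 + c 3 3) * (1/2 - c 1 3 - c 3 1 + c 3 2 - 2 * c 3 3)
      + (c 1 3 - c 2 3 + c 3 3) * (1/2 - c 1 3 + c 2 3 - c 3 1 - 2 * c 3 3)
      + (1/2 + c 1 3 - c 2 2 + c 3 3) * (- c 1 3 + c 2 2 - c 3 1 - 2 * c 3 3)"
    unfolding A4_def by (simp only: piv)
  have G1: "8*(c 1 3 + c 3 3)^2 - 4*(c 1 3 + c 3 3) - 1 = A1 + 2*A3"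
    unfolding A1e A3e by algebra
  have G2: "8*(c 3 1 + c 3 3)^2 - 4*(c 3 1 + c 3 3) - 1 = A1 + 2*A4"
    unfolding A1e A4e by algebra
  have G3: "(c 1 3 + c 3 1)^2 + (c 3 2 - c 3 3)^2 + (c 2 3 - c 3 3)^2 + (c 2 2 - c 3 3)^2
      - (c 1 3 + c 3 1) * ((c 3 2 - c 3 3) + (c 2 3 - c 3 3)) - (c 2 2 - c 3 3) * (1/2 + (c 1 3 + c 3 1)) - 1/8
      = -1/4 * A3 - 1/4 * A4"
    unfolding A3e A4e by algebra
  have G4: "(c 3 2 - c 3 3) + (c 2 3 - c 3 3) + (c 2 2 - c 3 3) - 2 * (c 1 3 + c 3 1) - 3/4 + 2 * (c 1 3 - c 3 1)^2
      = A1 + 2*A2 + 3/2*A3 + 3/2*A4"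
    unfolding A1e A2e A3e A4e by algebra
  have cc: "(3/4 - 2*((c 1 3 + c 3 3)-(c 3 1 + c 3 3))^2)^2 = 9/16"
    by (rule csq) (use G1 G2 z1 z3 z4 in simp_all)
  have Lsq: "(c 2 2 + c 3 3 - c 3 2 - c 2 3)^2 \<le> 7/16"
  proof (rule key_ineq[where U="c 3 2 - c 3 3" and V="c 2 3 - c 3 3" and R="c 2 2 - c 3 3"
        and s="c 1 3 + c 3 1" and c="3/4 - 2*((c 1 3 + c 3 3)-(c 3 1 + c 3 3))^2"])
    show "c 2 2 + c 3 3 - c 3 2 - c 2 3 = c 2 2 - c 3 3 - (c 3 2 - c 3 3) - (c 2 3 - c 3 3)" by simp
    show "c 3 2 - c 3 3 + (c 2 3 - c 3 3) + (c 2 2 - c 3 3) = 2 * (c 1 3 + c 3 1) + (3/4 - 2*((c 1 3 + c 3 3)-(c 3 1 + c 3 3))^2)"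
      using G4 z1 z2 z3 z4 by simp
    show "(c 1 3 + c 3 1)^2 + (c 3 2 - c 3 3)^2 + (c 2 3 - c 3 3)^2 + (c 2 2 - c 3 3)^2
      - (c 1 3 + c 3 1) * ((c 3 2 - c 3 3) + (c 2 3 - c 3 3)) - (c 2 2 - c 3 3) * (1/2 + (c 1 3 + c 3 1)) = 1/8"
      using G3 z3 z4 by simp
    show "(3/4 - 2*((c 1 3 + c 3 3)-(c 3 1 + c 3 3))^2)^2 = 9/16" by (rule cc)
  qed
  have "\<bar>c 2 2 + c 3 3 - c 3 2 - c 2 3\<bar> = sqrt ((c 2 2 + c 3 3 - c 3 2 - c 2 3)^2)" by simp
  also have "\<dots> \<le> sqrt (7/16)" using Lsq by (rule real_sqrt_le_mono)
  also have "sqrt (7/16) = sqrt 7 / 4" by (simp add: real_sqrt_divide)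
  finally have part1: "\<bar>c 2 2 + c 3 3 - c 3 2 - c 2 3\<bar> \<le> sqrt 7 / 4" .
  have "sqrt 7 < 4" by (rule real_less_lsqrt) simp_all
  then have "sqrt 7 / 4 < 1" by simp
  with part1 show ?thesis by simp
qed

end
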